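(* Let $X$ and $Y$ be infinite dimensional Banach spaces that are essentially incomparable. Then no compact operator $S\in B(Y)$ is equivalent after extension to any operator $T\in B(X)$.
   Context: All Banach spaces are complex; $B(X,Y)$ denotes bounded linear operators; invertibility means bounded inverse; $X\oplus Y$ is the $\ell^2$-direct sum and $\mathrm{id}_X$ the identity. Operators $T\in B(X)$ and $S\in B(Y)$ are equivalent after extension if there exist Banach spaces $X'$, $Y'$ and invertible $E\in B(Y\oplus Y',X\oplus X')$, $F\in B(X\oplus X',Y\oplus Y')$ with $\begin{bmatrix}T&0\\0&\mathrm{id}_{X'}\end{bmatrix}=E\begin{bmatrix}S&0\\0&\mathrm{id}_{Y'}\end{bmatrix}F$. An operator $S\in B(X,Y)$ is inessential if $\mathrm{id}_X-TS$ is Fredholm for every $T\in B(Y,X)$; $\mathcal J(X,Y)$ denotes the set of inessential operators in $B(X,Y)$. The spaces $X$ and $Y$ are essentially incomparable if $B(X,Y)=\mathcal J(X,Y)$ (equivalently, $B(Y,X)=\mathcal J(Y,X)$). *)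

theory Defs
  imports "HOL-Analysis.Analysis"
begin

class cbanach = banach +
  fixes cscale :: "complex \<Rightarrow> 'a \<Rightarrow> 'a"
  assumes cscale_add_right: "cscale a (x + y) = cscale a x + cscale a y"
    and cscale_add_left: "cscale (a + b) x = cscale a x + cscale b x"
    and cscale_cscale: "cscale a (cscale b x) = cscale (a * b) x"
    and cscale_one: "cscale 1 x = x"
    and cscale_of_real: "cscale (of_real r) x = r *\<^sub>R x"
    and norm_cscale: "norm (cscale a x) = cmod a * norm x"

text \<open>The l2-direct sum X (+) Y is the product type with norm
sqrt(norm x ^ 2 + norm y ^ 2) (library norm on products) and componentwise scaling.\<close>

instantiation prod :: (cbanach, cbanach) cbanach
begin
definition cscale_prod_def: "cscale a p = (cscale a (fst p), cscale a (snd p))"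
instance
proof
  fix a b :: complex and x y :: "'a \<times> 'b" and r :: real
  show "cscale a (x + y) = cscale a x + cscale a y"
    by (simp add: cscale_prod_def cscale_add_right)
  show "cscale (a + b) x = cscale a x + cscale b x"
    by (simp add: cscale_prod_def cscale_add_left)
  show "cscale a (cscale b x) = cscale (a * b) x"
    by (simp add: cscale_prod_def cscale_cscale)
  show "cscale 1 x = x"
    by (simp add: cscale_prod_def cscale_one)
  show "cscale (of_real r) x = r *\<^sub>R x"
    by (cases x) (simp add: cscale_prod_def cscale_of_real)
  show "norm (cscale a x) = cmod a * norm x"
    by (simp add: cscale_prod_def norm_cscale norm_prod_def power_mult_distrib
        real_sqrt_mult flip: distrib_left)
qed
end

definition bounded_clinear :: "('a::cbanach \<Rightarrow> 'b::cbanach) \<Rightarrow> bool" where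
  "bounded_clinear f \<longleftrightarrow> bounded_linear f \<and> (\<forall>c x. f (cscale c x) = cscale c (f x))"

definition cinvertible :: "('a::cbanach \<Rightarrow> 'b::cbanach) \<Rightarrow> bool" where
  "cinvertible f \<longleftrightarrow> bounded_clinear f \<and>
     (\<exists>g. bounded_clinear g \<and> (\<forall>x. g (f x) = x) \<and> (\<forall>y. f (g y) = y))"

text \<open>Finite dimensionality of a (complex) subspace; a subspace is finite dimensional over
C iff it is finite dimensional over R, so the real span is used.\<close>
definition fin_dim :: "'a::cbanach set \<Rightarrow> bool" where
  "fin_dim V \<longleftrightarrow> (\<exists>B. finite B \<and> V \<subseteq> span B)"

definition fredholm :: "('a::cbanach \<Rightarrow> 'b::cbanach) \<Rightarrow> bool" where
  "fredholm A \<longleftrightarrow> bounded_clinear A \<and> fin_dim {x. A x = 0} \<and> closed (range A) \<and>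
     (\<exists>B. finite B \<and> (\<forall>y. \<exists>x z. z \<in> span B \<and> y = A x + z))"

definition inessential :: "('a::cbanach \<Rightarrow> 'b::cbanach) \<Rightarrow> bool" where
  "inessential S \<longleftrightarrow> bounded_clinear S \<and>
     (\<forall>T :: 'b \<Rightarrow> 'a. bounded_clinear T \<longrightarrow> fredholm (\<lambda>x. x - T (S x)))"

definition essentially_incomparable :: "'a::cbanach itself \<Rightarrow> 'b::cbanach itself \<Rightarrow> bool" where
  "essentially_incomparable _ _ \<longleftrightarrow>
     (\<forall>S :: 'a \<Rightarrow> 'b. bounded_clinear S \<longrightarrow> inessential S)"

definition infinite_dimensional :: "'a::cbanach itself \<Rightarrow> bool" where
  "infinite_dimensional _ \<longleftrightarrow> \<not> fin_dim (UNIV :: 'a set)"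

definition compact_operator :: "('a::cbanach \<Rightarrow> 'b::cbanach) \<Rightarrow> bool" where
  "compact_operator S \<longleftrightarrow> bounded_clinear S \<and> compact (closure (S ` cball 0 1))"

text \<open>T and S are equivalent after extension via the extension spaces X', Y' (the types
'x2, 'y2) and the invertible operators E : Y (+) Y' -> X (+) X', F : X (+) X' -> Y (+) Y':
  diag(T, id_X') = E diag(S, id_Y') F.
The existential over X', Y' is expressed in the theorem by universal quantification
over the types, since the claim is the negation.\<close>
definition equiv_after_ext_via ::
  "('x::cbanach \<Rightarrow> 'x) \<Rightarrow> ('y::cbanach \<Rightarrow> 'y) \<Rightarrow>
   ('y \<times> 'y2::cbanach \<Rightarrow> 'x \<times> 'x2::cbanach) \<Rightarrow> ('x \<times> 'x2 \<Rightarrow> 'y \<times> 'y2) \<Rightarrow> bool" where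
  "equiv_after_ext_via T S E F \<longleftrightarrow> cinvertible E \<and> cinvertible F \<and>
     (\<forall>p. (T (fst p), snd p) = E ((\<lambda>q. (S (fst q), snd q)) (F p)))"

end

theory Submission
  imports Defs
begin


lemma closed_from_cball_pieces:
  fixes S :: "'a::real_normed_vector set"
  assumes "\<And>r. closed (S \<inter> cball 0 r)"
  shows "closed S"
proof -
  have "x \<in> S" if xS: "x \<in> closure S" for x
  proof -
    have "x \<in> closure (S \<inter> cball 0 (norm x + 1))"
      unfolding closure_approachable
    proof (intro allI impI)
      fix e :: real assume "e > 0"
      then obtain y where y: "y \<in> S" "dist y x < min e 1"
        using xS \<open>e > 0\<close> unfolding closure_approachable by (meson less_numeral_extra(1) min_less_iff_conj)
      then have "norm y \<le> norm x + 1"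
        by (metis dist_norm min_less_iff_conj norm_triangle_ineq2 add.commute diff_le_eq less_eq_real_def order_trans)
      then show "\<exists>y\<in>S \<inter> cball 0 (norm x + 1). dist y x < e" using y by auto
    qed
    then show ?thesis using assms[of "norm x + 1"] closure_closed by auto
  qed
  then show ?thesis using closure_subset_eq closure_subset by (metis subsetI subset_antisym closed_closure)
qed

lemma compact_span_cball:
  fixes V :: "'a::real_normed_vector set"
  assumes "finite V"
  shows "compact (span V \<inter> cball 0 r)"
  using assms
proof (induction V arbitrary: r rule: finite_induct)
  case empty
  have "span {} \<inter> cball (0::'a) r \<subseteq> {0}" by auto
  then have "finite (span {} \<inter> cball (0::'a) r)" using finite_subset by blast
  then show ?case by (rule finite_imp_compact)
next
  case (insert b V)
  have clV: "closed (span V)"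
    by (rule closed_from_cball_pieces) (use insert.IH compact_imp_closed in blast)
  show ?case
  proof (cases "b \<in> span V")
    case True
    then show ?thesis using insert.IH span_redundant by metis
  next
    case False
    define d where "d = infdist b (span V)"
    have d: "d > 0" unfolding d_def
      using infdist_pos_not_in_closed[OF clV _ False] span_zero by blast
    define R where "R = r + (r / d) * norm b"
    define f where "f = (\<lambda>p::real \<times> 'a. fst p *\<^sub>R b + snd p)"
    have cf: "compact (f ` ({-(r/d)..r/d} \<times> (span V \<inter> cball 0 R)))"
      unfolding f_def
      by (intro compact_continuous_image continuous_intros compact_Times insert.IH compact_Icc)
    have eq: "span (insert b V) \<inter> cball 0 r =
        f ` ({-(r/d)..r/d} \<times> (span V \<inter> cball 0 R)) \<inter> cball 0 r"
    proof
      show "span (insert b V) \<inter> cball 0 r \<subseteq> f ` ({-(r/d)..r/d} \<times> (span V \<inter> cball 0 R)) \<inter> cball 0 r"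
      proof
        fix w assume w: "w \<in> span (insert b V) \<inter> cball 0 r"
        then obtain t where t: "w - t *\<^sub>R b \<in> span V" by (auto simp: span_insert)
        define v where "v = w - t *\<^sub>R b"
        have wv: "w = t *\<^sub>R b + v" unfolding v_def by simp
        have nw: "norm w \<le> r" using w by auto
        have tb: "\<bar>t\<bar> * d \<le> r"
        proof (cases "t = 0")
          case True
          have "0 \<le> r" using nw norm_ge_zero[of w] by linarith
          then show ?thesis using True by simp
        next
          case False
          have "- (1/t) *\<^sub>R v \<in> span V" using t v_def span_scale by blast
          then have "d \<le> dist b (- (1/t) *\<^sub>R v)" unfolding d_def by (rule infdist_le)
          also have "\<dots> = norm (b + (1/t) *\<^sub>R v)" by (simp add: dist_norm)
          also have "\<dots> = norm ((1/t) *\<^sub>R w)" using False by (simp add: wv algebra_simps)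
          also have "\<dots> = norm w / \<bar>t\<bar>" by simp
          finally have "d \<le> norm w / \<bar>t\<bar>" .
          then have "\<bar>t\<bar> * d \<le> norm w" using False by (simp add: field_simps)
          then show ?thesis using nw by linarith
        qed
        then have tr: "\<bar>t\<bar> \<le> r / d" using d by (simp add: field_simps)
        have "norm v \<le> norm w + \<bar>t\<bar> * norm b"
          using norm_triangle_ineq4[of w "t *\<^sub>R b"] by (simp add: v_def)
        also have "\<dots> \<le> R" unfolding R_def using nw tr
          by (intro add_mono mult_right_mono) auto
        finally have "v \<in> span V \<inter> cball 0 R" using t v_def by auto
        moreover have "t \<in> {-(r/d)..r/d}" using tr by auto
        ultimately show "w \<in> f ` ({-(r/d)..r/d} \<times> (span V \<inter> cball 0 R)) \<inter> cball 0 r"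
          using w wv unfolding f_def by (force intro: image_eqI[where x="(t, v)"])
      qed
    next
      show "f ` ({-(r/d)..r/d} \<times> (span V \<inter> cball 0 R)) \<inter> cball 0 r \<subseteq> span (insert b V) \<inter> cball 0 r"
      proof
        fix w assume "w \<in> f ` ({-(r/d)..r/d} \<times> (span V \<inter> cball 0 R)) \<inter> cball 0 r"
        then obtain t v where w: "w = t *\<^sub>R b + v" "v \<in> span V" "w \<in> cball 0 r"
          unfolding f_def by auto
        have "v \<in> span (insert b V)" using w(2) span_mono[of V "insert b V"] by blast
        moreover have "t *\<^sub>R b \<in> span (insert b V)" by (simp add: span_base span_scale)
        ultimately show "w \<in> span (insert b V) \<inter> cball 0 r" using w by (simp add: span_add)
      qed
    qed
    show ?thesis unfolding eq by (intro compact_Int_closed cf closed_cball)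
  qed
qed

lemma closed_span_finite:
  fixes V :: "'a::real_normed_vector set"
  assumes "finite V" shows "closed (span V)"
  by (rule closed_from_cball_pieces) (use compact_span_cball[OF assms] compact_imp_closed in blast)



lemma fin_dim_of_compact_cball:
  fixes \<rho> :: real
  assumes "\<rho> > 0" and cc: "compact (cball (0::'a::real_normed_vector) \<rho>)"
  shows "\<exists>D. finite D \<and> (UNIV::'a set) \<subseteq> span D"
proof -
  have "cball (0::'a) \<rho> \<subseteq> (\<Union>c\<in>cball 0 \<rho>. ball c (\<rho>/2))"
    using assms(1) by force
  then obtain D where D: "D \<subseteq> cball 0 \<rho>" "finite D" "cball (0::'a) \<rho> \<subseteq> (\<Union>c\<in>D. ball c (\<rho>/2))"
    using compactE_image[OF cc, of "cball 0 \<rho>" "\<lambda>c. ball c (\<rho>/2)"] by auto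
  have approx: "\<forall>x\<in>cball 0 \<rho>. \<exists>w\<in>span D. dist x w \<le> \<rho> / 2^m" for m :: nat
  proof (induction m)
    case 0
    show ?case
    proof
      fix x :: 'a assume "x \<in> cball 0 \<rho>"
      then show "\<exists>w\<in>span D. dist x w \<le> \<rho> / 2 ^ 0"
        by (intro bexI[of _ 0]) (auto simp: span_zero dist_norm)
    qed
  next
    case (Suc m)
    show ?case
    proof
      fix x :: 'a assume x: "x \<in> cball 0 \<rho>"
      then obtain c where c: "c \<in> D" "dist c x < \<rho>/2" using D(3) by auto
      have "2 *\<^sub>R (x - c) \<in> cball 0 \<rho>"
        using c(2) by (simp add: dist_norm norm_minus_commute)
      then obtain w where w: "w \<in> span D" "dist (2 *\<^sub>R (x - c)) w \<le> \<rho> / 2^m"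
        using Suc.IH by blast
      have "c + (1/2) *\<^sub>R w \<in> span D"
        using w(1) c(1) by (simp add: span_add span_base span_scale)
      moreover have eqd: "dist x (c + (1/2) *\<^sub>R w) = dist (2 *\<^sub>R (x - c)) w / 2"
      proof -
        have "2 *\<^sub>R (x - c) - w = 2 *\<^sub>R (x - (c + (1/2) *\<^sub>R w))"
          by (simp add: algebra_simps)
        then show ?thesis by (simp add: dist_norm)
      qed
      moreover have "dist (2 *\<^sub>R (x - c)) w / 2 \<le> (\<rho> / 2^m) / 2"
        using w(2) by (rule divide_right_mono) simp
      moreover have "(\<rho> / 2^m) / 2 = \<rho> / 2 ^ Suc m" by simp
      ultimately show "\<exists>w\<in>span D. dist x w \<le> \<rho> / 2 ^ Suc m"
        by (intro bexI[of _ "c + (1/2) *\<^sub>R w"]) auto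
    qed
  qed
  have ball_sub: "cball 0 \<rho> \<subseteq> span D"
  proof
    fix x :: 'a assume x: "x \<in> cball 0 \<rho>"
    have "x \<in> closure (span D)"
      unfolding closure_approachable
    proof (intro allI impI)
      fix e :: real assume "e > 0"
      obtain m :: nat where "\<rho> / e < 2 ^ m"
        using real_arch_pow[of 2 "\<rho>/e"] by auto
      then have "\<rho> / 2^m < e" using \<open>e > 0\<close> by (simp add: field_simps)
      then obtain w where "w \<in> span D" "dist x w \<le> \<rho> / 2^m" using approx x by blast
      then show "\<exists>y\<in>span D. dist y x < e" using \<open>\<rho> / 2^m < e\<close>
        by (intro bexI[of _ w]) (auto simp: dist_commute)
    qed
    then show "x \<in> span D" using closed_span_finite[OF D(2)] closure_closed by auto
  qed
  have "y \<in> span D" for y :: 'a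
  proof (cases "y = 0")
    case True then show ?thesis by (simp add: span_zero)
  next
    case False
    have "(\<rho> / norm y) *\<^sub>R y \<in> cball 0 \<rho>" using assms(1) False by simp
    then have "(\<rho> / norm y) *\<^sub>R y \<in> span D" using ball_sub by blast
    then have "(norm y / \<rho>) *\<^sub>R ((\<rho> / norm y) *\<^sub>R y) \<in> span D" by (rule span_scale)
    then show ?thesis using False assms(1) by simp
  qed
  then show ?thesis using D(2) by blast
qed

lemma fin_dim_of_compact_plus_fin:
  fixes K :: "'a::banach \<Rightarrow> 'a"
  assumes K: "bounded_linear K" and L: "compact L" and KL: "K ` cball 0 1 \<subseteq> L"
    and W: "finite W" and dec: "\<And>y. \<exists>z w. w \<in> span W \<and> y = K z + w"
  shows "\<exists>D. finite D \<and> (UNIV::'a set) \<subseteq> span D"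
proof -
  interpret K: bounded_linear K by (rule K)
  define M where "M n = {a + c | a c. a \<in> (\<lambda>x. real n *\<^sub>R x) ` L \<and> c \<in> span W \<inter> cball 0 (real n)}" for n :: nat
  have cM: "compact (M n)" for n
    unfolding M_def by (intro compact_sums compact_scaling L compact_span_cball W)
  have cover: "(\<Union>n. M n) = UNIV"
  proof -
    have "y \<in> (\<Union>n. M n)" for y
    proof -
      obtain z w where zw: "w \<in> span W" "y = K z + w" using dec by blast
      obtain n :: nat where n: "max (norm z) (norm w) \<le> real n" using real_arch_simple by blast
      have "K z \<in> (\<lambda>x. real n *\<^sub>R x) ` L"
      proof (cases "n = 0")
        case True
        then have "z = 0" using n by simp
        then have "K z = real n *\<^sub>R K 0" by simp
        moreover have "K 0 \<in> L" using KL by (metis centre_in_cball image_subset_iff zero_le_one)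
        ultimately show ?thesis by blast
      next
        case False
        have "(1 / real n) *\<^sub>R z \<in> cball 0 1" using n False by (simp add: field_simps)
        then have "K ((1 / real n) *\<^sub>R z) \<in> L" using KL by blast
        moreover have "K z = real n *\<^sub>R K ((1 / real n) *\<^sub>R z)" using False by (simp add: K.scaleR)
        ultimately show ?thesis by blast
      qed
      moreover have "w \<in> span W \<inter> cball 0 (real n)" using zw n by auto
      ultimately show ?thesis using zw unfolding M_def by blast
    qed
    then show ?thesis by blast
  qed
  have "\<exists>n. interior (M n) \<noteq> {}"
  proof (rule ccontr)
    assume "\<nexists>n. interior (M n) \<noteq> {}"
    then have "euclidean interior_of \<Union>(range M) = {}"
      by (intro Baire_category_alt)
        (auto simp: completely_metrizable_space_euclidean closed_closedin[symmetric]
          intro: compact_imp_closed cM)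
    then show False using cover by simp
  qed
  then obtain n x0 where "x0 \<in> interior (M n)" by blast
  then obtain e where e: "e > 0" "ball x0 e \<subseteq> M n"
    by (meson open_contains_ball open_interior interior_subset subset_trans)
  have "cball x0 (e/2) \<subseteq> ball x0 e" using e(1) by (auto simp: subset_iff)
  then have "cball x0 (e/2) \<subseteq> M n" using e(2) by blast
  then have "compact (cball x0 (e/2))"
    using compact_Int_closed[OF cM[of n] closed_cball[of x0 "e/2"]] by (simp add: Int_absorb1)
  then have "compact ((\<lambda>x. x - x0) ` cball x0 (e/2))"
    by (intro compact_continuous_image continuous_intros)
  moreover have "(\<lambda>x. x - x0) ` cball x0 (e/2) = cball 0 (e/2)"
  proof
    show "(\<lambda>x. x - x0) ` cball x0 (e/2) \<subseteq> cball 0 (e/2)"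
      by (auto simp: dist_norm norm_minus_commute)
    show "cball 0 (e/2) \<subseteq> (\<lambda>x. x - x0) ` cball x0 (e/2)"
    proof
      fix y assume "y \<in> cball (0::'a) (e/2)"
      then have "y + x0 \<in> cball x0 (e/2)" by (simp add: dist_norm)
      then show "y \<in> (\<lambda>x. x - x0) ` cball x0 (e/2)" by (intro image_eqI[of _ _ "y + x0"]) auto
    qed
  qed
  ultimately show ?thesis using fin_dim_of_compact_cball[of "e/2"] e(1) by auto
qed



lemma cscale_zero_right: "cscale c (0::'a::cbanach) = 0"
  using norm_cscale[of c "0::'a"] by simp

lemma bcl_fst_in: "bounded_clinear (f :: 'a::cbanach \<times> 'b::cbanach \<Rightarrow> 'c::cbanach \<times> 'd::cbanach)
   \<Longrightarrow> bounded_clinear (\<lambda>x. fst (f (x, 0)))"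
  unfolding bounded_clinear_def
proof (intro conjI allI)
  assume f: "bounded_linear f \<and> (\<forall>c x. f (cscale c x) = cscale c (f x))"
  have p: "bounded_linear (\<lambda>x::'a. (x, 0::'b))"
    by (rule bounded_linear_Pair[OF bounded_linear_ident bounded_linear_zero])
  have "bounded_linear (\<lambda>x. f (x, 0::'b))"
    using f bounded_linear_compose[OF _ p, of f] by blast
  then show "bounded_linear (\<lambda>x. fst (f (x, 0)))"
    by (rule bounded_linear_compose[OF bounded_linear_fst])
  fix c and x :: 'a
  have "f (cscale c x, 0) = f (cscale c (x, 0::'b))" by (simp add: cscale_prod_def cscale_zero_right)
  then show "fst (f (cscale c x, 0)) = cscale c (fst (f (x, 0)))"
    using f by (simp add: cscale_prod_def)
qed

lemma bl_fst_snd: "bounded_linear (f :: 'a::real_normed_vector \<times> 'b::real_normed_vector \<Rightarrow> 'c::real_normed_vector \<times> 'd::real_normed_vector)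
  \<Longrightarrow> bounded_linear (g :: 'e::real_normed_vector \<times> 'f::real_normed_vector \<Rightarrow> 'a \<times> 'b)
  \<Longrightarrow> bounded_linear (\<lambda>z. fst (f (0, snd (g (z, 0)))))"
proof -
  assume f: "bounded_linear f" and g: "bounded_linear g"
  have p: "bounded_linear (\<lambda>x::'e. (x, 0::'f))"
    by (rule bounded_linear_Pair[OF bounded_linear_ident bounded_linear_zero])
  have "bounded_linear (\<lambda>z. g (z, 0::'f))" by (rule bounded_linear_compose[OF g p])
  then have "bounded_linear (\<lambda>z. snd (g (z, 0::'f)))" by (rule bounded_linear_compose[OF bounded_linear_snd])
  then have "bounded_linear (\<lambda>z. (0::'a, snd (g (z, 0::'f))))" by (rule bounded_linear_Pair[OF bounded_linear_zero])
  then have "bounded_linear (\<lambda>z. f (0, snd (g (z, 0::'f))))" by (rule bounded_linear_compose[OF f])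
  then show ?thesis by (rule bounded_linear_compose[OF bounded_linear_fst])
qed

theorem theorem5p2:
  fixes T :: "'x::cbanach \<Rightarrow> 'x"
    and S :: "'y::cbanach \<Rightarrow> 'y"
    and E :: "'y \<times> 'y2::cbanach \<Rightarrow> 'x \<times> 'x2::cbanach"
    and F :: "'x \<times> 'x2 \<Rightarrow> 'y \<times> 'y2"
  assumes "infinite_dimensional TYPE('x)"
    and "infinite_dimensional TYPE('y)"
    and "essentially_incomparable TYPE('x) TYPE('y)"
    and "compact_operator S"
    and "bounded_clinear T"
  shows "\<not> equiv_after_ext_via T S E F"
proof
  assume "equiv_after_ext_via T S E F"
  then have cE: "cinvertible E" and cF: "cinvertible F"
    and eq: "\<And>p. (T (fst p), snd p) = E (S (fst (F p)), snd (F p))"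
    unfolding equiv_after_ext_via_def by auto
  obtain H where H: "bounded_clinear H" "\<And>p. H (F p) = p" "\<And>q. F (H q) = q"
    using cF unfolding cinvertible_def by blast
  have bF: "bounded_clinear F" and bE: "bounded_clinear E"
    using cF cE unfolding cinvertible_def by auto
  have lF: "bounded_linear F" and lE: "bounded_linear E" and lH: "bounded_linear H"
    using bF bE H(1) unfolding bounded_clinear_def by auto
  have bS: "bounded_linear S" and cS: "compact (closure (S ` cball 0 1))"
    using assms(4) unfolding compact_operator_def bounded_clinear_def by auto
  define A where "A = (\<lambda>x. fst (F (x, 0)))"
  define B where "B = (\<lambda>y. fst (H (y, 0)))"
  define P where "P = (\<lambda>z. fst (F (0, snd (E (z, 0)))))"
  define K where "K = (\<lambda>y. P (S y))"
  have bA: "bounded_clinear A" unfolding A_def by (rule bcl_fst_in[OF bF])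
  have bB: "bounded_clinear B" unfolding B_def by (rule bcl_fst_in[OF H(1)])
  have lA: "bounded_linear A" using bA unfolding bounded_clinear_def by auto
  interpret A: bounded_linear A by (rule lA)
  have lP: "bounded_linear P" unfolding P_def by (rule bl_fst_snd[OF lF lE])
  interpret P: bounded_linear P by (rule lP)
  have lK: "bounded_linear K" unfolding K_def
    using bounded_linear_compose[OF lP bS] by (simp add: o_def)
  interpret K: bounded_linear K by (rule lK)
  interpret F: bounded_linear F by (rule lF)
  have ABK: "A (B y) + K y = y" for y
  proof -
    have "(T (fst (H (y,0))), snd (H (y,0))) = E (S (fst (F (H (y,0)))), snd (F (H (y,0))))"
      by (rule eq)
    then have "(T (fst (H (y,0))), snd (H (y,0))) = E (S y, 0)" by (simp add: H(3))
    then have sH: "snd (H (y,0)) = snd (E (S y, 0))" by (metis snd_conv)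
    have HB: "H (y,0) = (B y, 0) + (0, snd (E (S y, 0)))"
      proof -
      have "H (y,0) = (fst (H (y,0)), snd (H (y,0)))" by simp
      then show ?thesis using sH unfolding B_def by (simp add: prod_eq_iff)
    qed
    have "(y, 0) = F (H (y, 0))" by (simp add: H(3))
    also have "\<dots> = F ((B y, 0) + (0, snd (E (S y, 0))))" by (simp only: HB)
    also have "\<dots> = F (B y, 0) + F (0, snd (E (S y, 0)))" by (rule F.add)
    finally have "fst (y, 0::'y2) = fst (F (B y, 0) + F (0, snd (E (S y, 0))))" by (rule arg_cong)
    then have "y = fst (F (B y, 0) + F (0, snd (E (S y, 0))))" by (simp only: fst_conv)
    then have "fst (F (B y, 0) + F (0, snd (E (S y, 0)))) = y" by (rule sym)
    then show ?thesis unfolding A_def K_def P_def by (simp add: fst_add)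
  qed
  have "\<forall>S::'x\<Rightarrow>'y. bounded_clinear S \<longrightarrow> inessential S"
    using assms(3) unfolding essentially_incomparable_def .
  then have iA: "inessential A" using bA by blast
  then have "\<forall>T::'y\<Rightarrow>'x. bounded_clinear T \<longrightarrow> fredholm (\<lambda>x. x - T (A x))"
    unfolding inessential_def by blast
  then have "fredholm (\<lambda>x. x - B (A x))" using bB by blast
  then have "\<exists>G. finite G \<and> (\<forall>x. \<exists>x' z. z \<in> span G \<and> x = (x' - B (A x')) + z)"
    unfolding fredholm_def by (elim conjE) assumption
  then obtain G where G: "finite G" "\<And>x. \<exists>x' z. z \<in> span G \<and> x = (x' - B (A x')) + z"
    by (elim exE conjE) (rule that, assumption, blast)
  have dec: "\<exists>z w. w \<in> span (A ` G) \<and> y = K z + w" for y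
  proof -
    obtain x' z where xz: "z \<in> span G" "B y = (x' - B (A x')) + z" using G(2) by blast
    have e1: "A (B (A x')) = A x' - K (A x')" using ABK[of "A x'"] by (simp add: eq_diff_eq)
    have "A (x' - B (A x')) = A x' - A (B (A x'))" by (rule A.diff)
    then have e2: "A (x' - B (A x')) = K (A x')" using e1 by simp
    have "A (B y) = A (x' - B (A x')) + A z" using xz(2) by (simp add: A.add)
    then have hA: "A (B y) = K (A x') + A z" using e2 by simp
    have "y = A (B y) + K y" using ABK[of y] by simp
    also have "\<dots> = K (A x') + A z + K y" using hA by simp
    also have "\<dots> = K (A x' + y) + A z" by (simp add: K.add add_ac)
    finally have "y = K (A x' + y) + A z" .
    moreover have "A z \<in> span (A ` G)"
      using xz(1) span_linear_image[OF A.linear, of G] by blast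
    ultimately show ?thesis by blast
  qed
  have "compact (P ` closure (S ` cball 0 1))"
    by (intro compact_continuous_image cS linear_continuous_on lP)
  moreover have "K ` cball 0 1 \<subseteq> P ` closure (S ` cball 0 1)"
  proof -
    have "K ` cball 0 1 = P ` (S ` cball 0 1)" unfolding K_def by (simp add: image_image)
    then show ?thesis using closure_subset by (metis image_mono)
  qed
  ultimately have "\<exists>D. finite D \<and> (UNIV::'y set) \<subseteq> span D"
    by (rule fin_dim_of_compact_plus_fin[OF lK _ _ finite_imageI[OF G(1)] dec])
  then have "fin_dim (UNIV :: 'y set)" unfolding fin_dim_def .
  then show False using assms(2) unfolding infinite_dimensional_def by (elim notE)
qed

end
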